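(* Let $n$ be even. For any complete oriented flags $F_0,\dots,F_{n+1}$ in $\mathbb{R}^n$, $dE(F_0,\dots,F_{n+1})=0$.
   Context: A complete oriented flag $F$ is a chain $\{0\}=F^0\subset\dots\subset F^n=\mathbb{R}^n$, $\dim F^i=i$, each $F^i$ with a chosen open half-space $(F^i)^+$ bounded by $F^{i-1}$ (equivalently orientations on each $F^i$ compatible as follows: $(v_1,\dots,v_{i-1},x)$ is positive in $F^i$ iff $(v_1,\dots,v_{i-1})$ is positive in $F^{i-1}$ and $x\in(F^i)^+$). For an oriented $k$-dimensional subspace $W$ ($0\le k\le n-1$) and complete oriented flag $F$, let $d$ be the unique $1\le d\le k+1$ with $F^{d-1}\subseteq W$, $F^d\not\subseteq W$; $[W,F]$ is $W+F^d$ oriented by a positive basis of $W$ followed by any $x\in(F^d)^+$. Set $[F_1]=F_1^1$ and $[F_1,\dots,F_k]=[[F_1,\dots,F_{k-1}],F_k]$. For an oriented $n$-dimensional space $U$, $\mathrm{Or}(U)\in\{\pm1\}$ is the sign of its orientation relative to the canonical orientation of $\mathbb{R}^n$. Define $E$ on $(n+1)$-tuples of complete oriented flags by $E(F_0,\dots,F_n)=\prod_{i=0}^n\mathrm{Or}([F_0,\dots,\widehat{F_i},\dots,F_n])\in\{\pm1\}$, and $dE(F_0,\dots,F_{n+1})=\sum_{i=0}^{n+1}(-1)^iE(F_0,\dots,\widehat{F_i},\dots,F_{n+1})$. *)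

theory Defs
  imports "HOL-Analysis.Analysis"
begin

text \<open>Vectors of R^n are elements of real^'n, where the finite index type 'n carries
an enumeration (class enum); the canonical orientation of R^n is the one of the
standard basis listed in the order of that enumeration.\<close>

text \<open>A complete oriented flag: a pair (F, H) where F i is the i-dimensional subspace
F^i and H i is the chosen open half-space (F^i)^+ of F^i bounded by F^(i-1).\<close>
type_synonym 'n oflag = "(nat \<Rightarrow> (real^'n) set) \<times> (nat \<Rightarrow> (real^'n) set)"

definition is_oflag :: "('n::enum) oflag \<Rightarrow> bool" where
  "is_oflag FH \<longleftrightarrow>
     (let F = fst FH; H = snd FH in
        F 0 = {0}
      \<and> (\<forall>i\<le>CARD('n). subspace (F i) \<and> dim (F i) = i)
      \<and> (\<forall>i<CARD('n). F i \<subseteq> F (Suc i))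
      \<and> (\<forall>i\<in>{1..CARD('n)}. \<exists>v\<in>F i - F (i - 1).
            H i = {a + t *\<^sub>R v | a t. a \<in> F (i - 1) \<and> t > 0}))"

text \<open>An oriented subspace is represented by a positive ordered basis (a list of
vectors); the subspace is its span and the orientation the class of the basis.\<close>

definition flag_index :: "('n::enum) oflag \<Rightarrow> (real, 'n) vec list \<Rightarrow> nat" where
  "flag_index FH bs = (LEAST d. \<not> fst FH d \<subseteq> span (set bs))"

text \<open>[W,F]: W + F^d, oriented by a positive basis of W followed by any x in (F^d)^+.\<close>
definition flag_join :: "(real, 'n::enum) vec list \<Rightarrow> 'n oflag \<Rightarrow> (real, 'n) vec list" where
  "flag_join bs FH = bs @ [SOME x. x \<in> snd FH (flag_index FH bs)]"

text \<open>[F_1,...,F_k] = [[F_1,...,F_{k-1}],F_k], with [F_1] = [{0},F_1] = F_1^1.\<close>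
definition flag_bracket :: "('n::enum) oflag list \<Rightarrow> (real, 'n) vec list" where
  "flag_bracket Fs = foldl flag_join [] Fs"

definition enum_pos :: "'n::enum \<Rightarrow> nat" where
  "enum_pos i = (THE k. k < length (enum_class.enum :: 'n list) \<and> enum_class.enum ! k = i)"

definition Or :: "(real, 'n::enum) vec list \<Rightarrow> real" where
  "Or bs = sgn (det ((\<chi> i. \<chi> j. (bs ! enum_pos i) $ j) :: ((real, 'n) vec, 'n) vec))"

definition remove_nth :: "nat \<Rightarrow> 'a list \<Rightarrow> 'a list" where
  "remove_nth i xs = take i xs @ drop (Suc i) xs"

definition E_fun :: "('n::enum) oflag list \<Rightarrow> real" where
  "E_fun Fs = (\<Prod>i<length Fs. Or (flag_bracket (remove_nth i Fs)))"

definition dE_fun :: "('n::enum) oflag list \<Rightarrow> real" where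
  "dE_fun Fs = (\<Sum>i<length Fs. (-1) ^ i * E_fun (remove_nth i Fs))"

end

theory Submission
  imports Defs "HOL-Library.Sublist"
begin

abbreviation en :: "nat \<Rightarrow> 'n::enum" where "en k \<equiv> (enum_class.enum :: 'n list) ! k"

lemma len_enum: "length (enum_class.enum :: 'n::enum list) = CARD('n)"
  by (simp add: card_UNIV_length_enum)

lemma enum_pos_en: "k < CARD('n) \<Longrightarrow> enum_pos (en k :: 'n::enum) = k"
  unfolding enum_pos_def
  by (rule the_equality) (auto simp: len_enum nth_eq_iff_index_eq enum_distinct)

lemma enum_pos_props: "enum_pos (i::'n::enum) < CARD('n) \<and> en (enum_pos i) = i"
proof -
  have "i \<in> set enum_class.enum" by (simp add: in_enum)
  then obtain k where k: "k < length (enum_class.enum :: 'n list)" "enum_class.enum ! k = i"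
    by (auto simp: in_set_conv_nth)
  then have "enum_pos i = k" using enum_pos_en[of k, where 'n='n] by (simp add: len_enum)
  then show ?thesis using k by (simp add: len_enum)
qed

lemma enum_pos_less: "enum_pos (i::'n::enum) < CARD('n)" using enum_pos_props by blast
lemma en_enum_pos: "en (enum_pos (i::'n::enum)) = i" using enum_pos_props by blast

lemma enum_pos_eq_iff: "k < CARD('n) \<Longrightarrow> (enum_pos (i::'n::enum) = k) = (i = en k)"
  using enum_pos_en en_enum_pos by metis

lemma bij_enum_pos: "bij_betw (enum_pos :: 'n::enum \<Rightarrow> nat) UNIV {..<CARD('n)}"
  unfolding bij_betw_def inj_on_def
  by (auto simp: enum_pos_less image_iff) (metis en_enum_pos, metis enum_pos_en)

lemma sum_enum_pos: "(\<Sum>i\<in>UNIV. f (enum_pos (i::'n::enum))) = (\<Sum>k<CARD('n). f k)"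
  using sum.reindex_bij_betw[OF bij_enum_pos, of f] by simp

definition D :: "(real,'n::enum) vec list \<Rightarrow> real" where
  "D bs = det (\<chi> i. bs ! enum_pos i)"

lemma Or_D: "Or bs = sgn (D bs)"
  unfolding Or_def D_def by (simp add: vec_lambda_eta)

lemma rowmat_upd:
  fixes xs :: "(real,'n::enum) vec list"
  assumes "p < CARD('n)" "length xs = CARD('n)"
  shows "((\<chi> i. (xs[p:=v]) ! enum_pos i)::((real,'n) vec,'n) vec) = (\<chi> i. if i = en p then v else xs ! enum_pos i)"
  using assms enum_pos_en[of p, where 'n='n] by (auto simp: vec_eq_iff nth_list_update en_enum_pos enum_pos_less)

lemma D_upd:
  fixes xs :: "(real,'n::enum) vec list"
  assumes "p < CARD('n)" "length xs = CARD('n)"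
  shows "D (xs[p:=v]) = det (\<chi> i. if i = en p then v else xs ! enum_pos i)"
  unfolding D_def rowmat_upd[OF assms] ..

lemma D_upd_add:
  fixes xs :: "(real,'n::enum) vec list"
  assumes "p < CARD('n)" "length xs = CARD('n)"
  shows "D (xs[p:=v+w]) = D (xs[p:=v]) + D (xs[p:=w])"
  unfolding D_upd[OF assms] using det_row_add[of "en p" "\<lambda>_. v" "\<lambda>_. w" "\<lambda>i. xs ! enum_pos i"]
  by simp

lemma D_upd_scale:
  fixes xs :: "(real,'n::enum) vec list"
  assumes "p < CARD('n)" "length xs = CARD('n)"
  shows "D (xs[p:=c *\<^sub>R v]) = c * D (xs[p:=v])"
  unfolding D_upd[OF assms] using det_row_mul[of "en p" c "\<lambda>_. v" "\<lambda>i. xs ! enum_pos i"]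
  unfolding scalar_mult_eq_scaleR by simp

lemma D_upd_linear:
  fixes xs :: "(real,'n::enum) vec list"
  assumes "p < CARD('n)" "length xs = CARD('n)"
  shows "linear (\<lambda>v. D (xs[p:=v]))"
  by (rule linearI) (simp_all add: D_upd_add[OF assms] D_upd_scale[OF assms])

lemma D_rep:
  fixes xs :: "(real,'n::enum) vec list"
  assumes "p < CARD('n)" "q < CARD('n)" "p \<noteq> q" "length xs = CARD('n)" "xs ! p = xs ! q"
  shows "D xs = 0"
  unfolding D_def
proof (rule det_identical_rows[of "en p" "en q"])
  show "en p \<noteq> (en q :: 'n)" using assms enum_pos_en[of p, where 'n='n] enum_pos_en[of q, where 'n='n] by metis
  show "row (en p) ((\<chi> i. xs ! enum_pos i)::((real,'n) vec,'n) vec) = row (en q) ((\<chi> i. xs ! enum_pos i)::((real,'n) vec,'n) vec)"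
    using assms enum_pos_en[of p, where 'n='n] enum_pos_en[of q, where 'n='n] by (simp add: row_def vec_lambda_eta)
qed

lemma D_swap:
  fixes xs :: "(real,'n::enum) vec list"
  assumes "p < CARD('n)" "q < CARD('n)" "p \<noteq> q" "length xs = CARD('n)"
  shows "D (xs[p:=b, q:=a]) = - D (xs[p:=a, q:=b])"
proof -
  define f where "f v w = D (xs[p:=v, q:=w])" for v w
  have lq: "linear (f v)" for v unfolding f_def using assms by (intro D_upd_linear) auto
  have lp: "linear (\<lambda>v. f v w)" for w
  proof -
    have "f v w = D ((xs[q:=w])[p:=v])" for v unfolding f_def using assms by (simp add: list_update_swap)
    then show ?thesis using assms D_upd_linear[of p "xs[q:=w]"] by simp
  qed
  have z: "f v v = 0" for v unfolding f_def using assms by (intro D_rep[of p q]) auto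
  have "0 = f (a+b) (a+b)" using z by simp
  also have "\<dots> = f a a + f a b + (f b a + f b b)"
    using linear_add[OF lp] linear_add[OF lq] by simp
  finally show ?thesis using z unfolding f_def by simp
qed

lemma D_move:
  fixes x :: "(real,'n::enum) vec"
  assumes "length (pre @ x # ys @ zs) = CARD('n)"
  shows "D (pre @ x # ys @ zs) = (-1)^length ys * D (pre @ ys @ x # zs)"
  using assms
proof (induction ys arbitrary: pre)
  case Nil then show ?case by simp
next
  case (Cons y ys)
  let ?L = "pre @ y # x # ys @ zs"
  have l: "length ?L = CARD('n)" using Cons.prems by simp
  have "D (?L[length pre := x, Suc (length pre) := y]) = - D (?L[length pre := y, Suc (length pre) := x])"
    by (rule D_swap) (use l in auto)
  moreover have "?L[length pre := x, Suc (length pre) := y] = pre @ x # y # ys @ zs"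
    by (simp add: list_update_append)
  moreover have "?L[length pre := y, Suc (length pre) := x] = ?L"
    by (simp add: list_update_append)
  moreover have "D ((pre @ [y]) @ x # ys @ zs) = (-1)^length ys * D ((pre @ [y]) @ ys @ x # zs)"
    by (rule Cons.IH) (use Cons.prems in simp)
  ultimately show ?case by simp
qed

lemma D_move_nth:
  fixes xs :: "(real,'n::enum) vec list"
  assumes "length xs = CARD('n)" "p < length xs"
  shows "D (xs ! p # remove_nth p xs) = (-1)^p * D xs"
proof -
  have e: "xs = take p xs @ xs ! p # drop (Suc p) xs" using assms by (simp add: id_take_nth_drop)
  have "D ([] @ xs ! p # take p xs @ drop (Suc p) xs) = (-1)^length (take p xs) * D ([] @ take p xs @ xs ! p # drop (Suc p) xs)"
    by (rule D_move) (use assms e in \<open>simp add: min_def\<close>)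
  then show ?thesis using assms e by (simp add: remove_nth_def min_def)
qed

lemma D_nz_iff:
  fixes xs :: "(real,'n::enum) vec list"
  shows "D xs \<noteq> 0 \<longleftrightarrow> (\<forall>c. (\<Sum>k<CARD('n). c k *\<^sub>R xs ! k) = 0 \<longrightarrow> (\<forall>k<CARD('n). c k = 0))"
proof -
  let ?A = "(\<chi> i. xs ! enum_pos i)::((real,'n) vec,'n) vec"
  have "D xs \<noteq> 0 \<longleftrightarrow> (\<exists>B. ?A ** B = mat 1)"
    unfolding D_def by (metis invertible_det_nz invertible_right_inverse)
  also have "\<dots> \<longleftrightarrow> (\<forall>c. sum (\<lambda>i::'n. c i *s row i ?A) UNIV = 0 \<longrightarrow> (\<forall>i. c i = 0))"
    by (rule matrix_right_invertible_independent_rows)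
  also have "\<dots> \<longleftrightarrow> (\<forall>c. (\<Sum>k<CARD('n). c k *\<^sub>R xs ! k) = 0 \<longrightarrow> (\<forall>k<CARD('n). c k = 0))"
  proof
    assume H: "\<forall>c. sum (\<lambda>i::'n. c i *s row i ?A) UNIV = 0 \<longrightarrow> (\<forall>i. c i = 0)"
    show "\<forall>c. (\<Sum>k<CARD('n). c k *\<^sub>R xs ! k) = 0 \<longrightarrow> (\<forall>k<CARD('n). c k = 0)"
    proof (intro allI impI)
      fix c :: "nat \<Rightarrow> real" and k assume s: "(\<Sum>k<CARD('n). c k *\<^sub>R xs ! k) = 0" and k: "k < CARD('n)"
      have "sum (\<lambda>i::'n. c (enum_pos i) *s row i ?A) UNIV = (\<Sum>i\<in>UNIV. (\<lambda>k. c k *\<^sub>R xs ! k) (enum_pos (i::'n)))"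
        using [[show_types]] by (simp add: row_def vec_lambda_eta scalar_mult_eq_scaleR)
      also have "\<dots> = 0" using s sum_enum_pos[of "\<lambda>k. c k *\<^sub>R xs ! k", where 'n='n] by simp
      finally have S: "sum (\<lambda>i::'n. c (enum_pos i) *s row i ?A) UNIV = 0" .
      have "\<forall>i. c (enum_pos (i::'n)) = 0" using H[rule_format, of "\<lambda>i. c (enum_pos i)"] S by simp
      then show "c k = 0" using enum_pos_en[of k, where 'n='n] k by metis
    qed
  next
    assume H: "\<forall>c. (\<Sum>k<CARD('n). c k *\<^sub>R xs ! k) = 0 \<longrightarrow> (\<forall>k<CARD('n). c k = 0)"
    show "\<forall>c. sum (\<lambda>i::'n. c i *s row i ?A) UNIV = 0 \<longrightarrow> (\<forall>i. c i = 0)"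
    proof (intro allI impI)
      fix c :: "'n \<Rightarrow> real" and i assume s: "sum (\<lambda>i::'n. c i *s row i ?A) UNIV = 0"
      have "(\<Sum>k<CARD('n). c (en k) *\<^sub>R xs ! k) = (\<Sum>i\<in>UNIV. (\<lambda>k. c (en k) *\<^sub>R xs ! k) (enum_pos (i::'n)))"
        using sum_enum_pos[of "\<lambda>k. c (en k) *\<^sub>R xs ! k", where 'n='n] by simp
      also have "\<dots> = sum (\<lambda>i::'n. c i *s row i ?A) UNIV"
        by (simp add: row_def vec_lambda_eta scalar_mult_eq_scaleR en_enum_pos)
      finally have "\<forall>k<CARD('n). c (en k) = 0" using H s by auto
      then show "c i = 0" using enum_pos_less[of i] en_enum_pos[of i] by metis
    qed
  qed
  finally show ?thesis .
qed

lemma D_nz_span: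
  fixes xs :: "(real,'n::enum) vec list"
  assumes "D xs \<noteq> 0"
  shows "\<exists>c. v = (\<Sum>k<CARD('n). c k *\<^sub>R xs ! k)"
proof -
  let ?A = "(\<chi> i. xs ! enum_pos i)::((real,'n) vec,'n) vec"
  have "\<exists>B. B ** ?A = mat 1" using assms unfolding D_def by (metis invertible_det_nz invertible_left_inverse)
  then have "\<exists>B. transpose ?A ** B = mat 1" by (simp add: right_invertible_transpose)
  then have "surj ((*v) (transpose ?A))" using matrix_right_invertible_surjective by blast
  then obtain x where x: "v = transpose ?A *v x" by (metis surjD)
  also have "\<dots> = sum (\<lambda>i. (x$i) *s row i ?A) UNIV" by (simp add: matrix_mult_sum)
  also have "\<dots> = (\<Sum>i\<in>UNIV. (\<lambda>k. x $ (en k) *\<^sub>R xs ! k) (enum_pos (i::'n)))"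
    by (simp add: row_def vec_lambda_eta scalar_mult_eq_scaleR en_enum_pos)
  also have "\<dots> = (\<Sum>k<CARD('n). x $ (en k) *\<^sub>R xs ! k)" using sum_enum_pos[of "\<lambda>k. x $ (en k) *\<^sub>R xs ! k", where 'n='n] by simp
  finally show ?thesis by (rule exI[of _ "\<lambda>k. x $ (en k)"])
qed

lemma D_slot_span:
  fixes bs :: "(real,'n::enum) vec list"
  assumes "length (bs @ v # X) = CARD('n)" "v \<in> span (set bs)"
  shows "D (bs @ v # X) = 0"
proof -
  let ?L = "bs @ v # X" and ?p = "length bs"
  define f where "f w = D (?L[?p := w])" for w
  have p: "?p < CARD('n)" using assms by simp
  have lin: "linear f" unfolding f_def by (rule D_upd_linear) (use assms in auto)
  have sub: "subspace {w. f w = 0}"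
    by (rule subspaceI) (auto simp: linear_0[OF lin] linear_add[OF lin] linear_cmul[OF lin])
  have "set bs \<subseteq> {w. f w = 0}"
  proof
    fix w assume "w \<in> set bs"
    then obtain k where k: "k < length bs" "bs ! k = w" by (auto simp: in_set_conv_nth)
    show "w \<in> {w. f w = 0}" unfolding f_def
      by (rule CollectI, rule D_rep[of k ?p]) (use assms k in \<open>auto simp: nth_append nth_list_update\<close>)
  qed
  then have "span (set bs) \<subseteq> {w. f w = 0}" using sub by (rule span_minimal)
  then have "f v = 0" using assms by auto
  then show ?thesis unfolding f_def by simp
qed

definition li :: "(real,'n::enum) vec list \<Rightarrow> bool" where
  "li xs \<longleftrightarrow> (\<forall>c. (\<Sum>k<length xs. c k *\<^sub>R xs ! k) = 0 \<longrightarrow> (\<forall>k<length xs. c k = 0))"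

lemma li_nil: "li []" by (simp add: li_def)

lemma li_snoc:
  assumes "li xs" "v \<notin> span (set xs)"
  shows "li (xs @ [v])"
  unfolding li_def
proof (intro allI impI)
  fix c :: "nat \<Rightarrow> real" and k
  assume s: "(\<Sum>k<length (xs @ [v]). c k *\<^sub>R (xs @ [v]) ! k) = 0" and k: "k < length (xs @ [v])"
  have e: "(\<Sum>k<length (xs @ [v]). c k *\<^sub>R (xs @ [v]) ! k) = (\<Sum>k<length xs. c k *\<^sub>R xs ! k) + c (length xs) *\<^sub>R v"
    by (simp add: nth_append)
  have cl: "c (length xs) = 0"
  proof (rule ccontr)
    assume nz: "c (length xs) \<noteq> 0"
    have h: "c (length xs) *\<^sub>R v = - (\<Sum>k<length xs. c k *\<^sub>R xs ! k)"
      using s e by (simp add: eq_neg_iff_add_eq_0 add.commute)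
    have "v = (1 / c (length xs)) *\<^sub>R (c (length xs) *\<^sub>R v)" using nz by simp
    also have "\<dots> = (- 1 / c (length xs)) *\<^sub>R (\<Sum>k<length xs. c k *\<^sub>R xs ! k)"
      unfolding h by simp
    also have "\<dots> \<in> span (set xs)"
      by (intro span_mul span_sum span_base) auto
    finally show False using assms by simp
  qed
  then have "(\<Sum>k<length xs. c k *\<^sub>R xs ! k) = 0" using s e by simp
  then have "\<forall>k<length xs. c k = 0" using assms unfolding li_def by blast
  then show "c k = 0" using k cl by (cases "k = length xs") auto
qed

lemma D_nz_li:
  fixes xs :: "(real,'n::enum) vec list"
  assumes "length xs = CARD('n)"
  shows "D xs \<noteq> 0 \<longleftrightarrow> li xs"
  unfolding D_nz_iff li_def assms ..

definition ub :: "('n::enum) oflag \<Rightarrow> (real,'n) vec list" where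
  "ub FH = map (\<lambda>d. SOME x. x \<in> snd FH (Suc d)) [0..<CARD('n)]"

lemma length_ub[simp]: "length (ub (FH::('n::enum) oflag)) = CARD('n)"
  by (simp add: ub_def)

lemma oflag_facts:
  fixes FH :: "('n::enum) oflag"
  assumes "is_oflag FH"
  shows "fst FH 0 = {0}"
    "\<And>i. i \<le> CARD('n) \<Longrightarrow> subspace (fst FH i) \<and> dim (fst FH i) = i"
    "\<And>i. i < CARD('n) \<Longrightarrow> fst FH i \<subseteq> fst FH (Suc i)"
    "\<And>i. i \<in> {1..CARD('n)} \<Longrightarrow> \<exists>v\<in>fst FH i - fst FH (i - 1).
            snd FH i = {a + t *\<^sub>R v | a t. a \<in> fst FH (i - 1) \<and> t > 0}"
  using assms unfolding is_oflag_def Let_def by auto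

lemma ub_in:
  fixes FH :: "('n::enum) oflag"
  assumes "is_oflag FH" "d < CARD('n)"
  shows "ub FH ! d \<in> fst FH (Suc d) - fst FH d"
proof -
  note ff = oflag_facts[OF assms(1)]
  obtain v where v: "v \<in> fst FH (Suc d) - fst FH d"
    "snd FH (Suc d) = {a + t *\<^sub>R v | a t. a \<in> fst FH d \<and> t > 0}"
    using ff(4)[of "Suc d"] assms by auto
  have sd: "subspace (fst FH d)" "subspace (fst FH (Suc d))" using ff(2)[of d] ff(2)[of "Suc d"] assms by auto
  have z0: "0 \<in> fst FH d" using sd subspace_0 by blast
  have "\<exists>a t. 0 + 1 *\<^sub>R v = a + t *\<^sub>R v \<and> a \<in> fst FH d \<and> t > (0::real)"
    using z0 by (intro exI[of _ 0] exI[of _ "1::real"]) simp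
  then have "0 + 1 *\<^sub>R v \<in> snd FH (Suc d)" unfolding v(2) by blast
  then have "(SOME x. x \<in> snd FH (Suc d)) \<in> snd FH (Suc d)" by (rule someI)
  then obtain a t where at: "ub FH ! d = a + t *\<^sub>R v" "a \<in> fst FH d" "t > 0"
    using v assms by (auto simp: ub_def)
  have "a \<in> fst FH (Suc d)" using at ff(3)[of d] assms by auto
  then have i1: "ub FH ! d \<in> fst FH (Suc d)"
    using at v sd by (simp add: subspace_add subspace_scale)
  have "ub FH ! d \<notin> fst FH d"
  proof
    assume "ub FH ! d \<in> fst FH d"
    then have "ub FH ! d - a \<in> fst FH d" using at sd subspace_diff by blast
    then have "(1/t) *\<^sub>R (ub FH ! d - a) \<in> fst FH d"
      using sd subspace_scale by blast
    moreover have "(1/t) *\<^sub>R (ub FH ! d - a) = v" using at by simp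
    ultimately show False using v by simp
  qed
  then show ?thesis using i1 by simp
qed

lemma flag_span:
  fixes FH :: "('n::enum) oflag"
  assumes "is_oflag FH" "d \<le> CARD('n)"
  shows "fst FH d = span (set (take d (ub FH)))"
  using assms(2)
proof (induction d)
  case 0
  then show ?case using oflag_facts(1)[OF assms(1)] by simp
next
  case (Suc d)
  note ff = oflag_facts[OF assms(1)]
  let ?S = "set (take d (ub FH))" and ?u = "ub FH ! d"
  have IH: "fst FH d = span ?S" using Suc by simp
  have u: "?u \<in> fst FH (Suc d) - fst FH d" using ub_in[OF assms(1), of d] Suc.prems by simp
  have sd: "subspace (fst FH d) \<and> dim (fst FH d) = d" "subspace (fst FH (Suc d)) \<and> dim (fst FH (Suc d)) = Suc d"
    using ff(2)[of d] ff(2)[of "Suc d"] Suc by auto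
  have tk: "set (take (Suc d) (ub FH)) = insert ?u ?S"
    using Suc by (simp add: take_Suc_conv_app_nth)
  have sub: "span (insert ?u ?S) \<subseteq> fst FH (Suc d)"
  proof (rule span_minimal)
    have "?S \<subseteq> span ?S" by (rule span_superset)
    then have "?S \<subseteq> fst FH (Suc d)" using IH ff(3)[of d] Suc by auto
    then show "insert ?u ?S \<subseteq> fst FH (Suc d)" using u by auto
  qed (use sd in auto)
  have "dim (span (insert ?u ?S)) = Suc d"
    using u IH sd by (simp add: dim_insert)
  then have "span (insert ?u ?S) = fst FH (Suc d)"
    using sub sd by (intro subspace_dim_equal) auto
  then show ?case using tk by simp
qed

lemma flag_join_char:
  fixes FH :: "('n::enum) oflag"
  assumes "is_oflag FH" "length bs < CARD('n)"
  shows "\<exists>j<CARD('n). ub FH ! j \<notin> span (set bs) \<and> (\<forall>i<j. ub FH ! i \<in> span (set bs))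
          \<and> flag_join bs FH = bs @ [ub FH ! j]"
proof -
  have ex: "\<exists>j<CARD('n). ub FH ! j \<notin> span (set bs)"
  proof (rule ccontr)
    assume "\<not> ?thesis"
    then have "set (take CARD('n) (ub FH)) \<subseteq> span (set bs)"
      by (metis in_set_conv_nth length_ub subsetI take_all_iff order.refl)
    then have "fst FH CARD('n) \<subseteq> span (set bs)"
      using flag_span[OF assms(1), of "CARD('n)"] by (simp add: span_minimal)
    then have "dim (fst FH CARD('n)) \<le> card (set bs)"
      by (intro dim_le_card) auto
    also have "\<dots> \<le> length bs" by (rule card_length)
    finally show False using oflag_facts(2)[OF assms(1), of "CARD('n)"] assms(2) by simp
  qed
  define j where "j = (LEAST j. ub FH ! j \<notin> span (set bs))"
  have "\<exists>j. ub FH ! j \<notin> span (set bs)" using ex by blast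
  then have j1: "ub FH ! j \<notin> span (set bs)" unfolding j_def by (rule LeastI_ex)
  have j2: "\<forall>i<j. ub FH ! i \<in> span (set bs)" unfolding j_def using not_less_Least by blast
  obtain j' where j': "j' < CARD('n)" "ub FH ! j' \<notin> span (set bs)" using ex by blast
  have "j \<le> j'" unfolding j_def by (rule Least_le) (rule j'(2))
  then have jN: "j < CARD('n)" using j' by simp
  have fi: "flag_index FH bs = Suc j"
    unfolding flag_index_def
  proof (rule Least_equality)
    have "ub FH ! j \<in> set (take (Suc j) (ub FH))" using jN by (simp add: take_Suc_conv_app_nth)
    then have "ub FH ! j \<in> fst FH (Suc j)" using flag_span[OF assms(1), of "Suc j"] jN span_base by auto
    then show "\<not> fst FH (Suc j) \<subseteq> span (set bs)" using j1 by blast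
  next
    fix d assume nd: "\<not> fst FH d \<subseteq> span (set bs)"
    show "Suc j \<le> d"
    proof (rule ccontr)
      assume "\<not> Suc j \<le> d"
      then have dj: "d \<le> j" by simp
      have "set (take d (ub FH)) \<subseteq> span (set bs)"
      proof
        fix x assume "x \<in> set (take d (ub FH))"
        then obtain i where "i < d" "x = ub FH ! i" using dj jN by (auto simp: in_set_conv_nth)
        then show "x \<in> span (set bs)" using j2 dj by auto
      qed
      then have "fst FH d \<subseteq> span (set bs)"
        using flag_span[OF assms(1), of d] dj jN by (simp add: span_minimal)
      then show False using nd by simp
    qed
  qed
  have "flag_join bs FH = bs @ [ub FH ! j]"
    unfolding flag_join_def fi using jN by (simp add: ub_def)
  then show ?thesis using jN j1 j2 by blast
qed

lemma length_flag_join[simp]: "length (flag_join bs FH) = Suc (length bs)"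
  by (simp add: flag_join_def)

lemma length_foldl_join[simp]: "length (foldl flag_join bs Fs) = length bs + length Fs"
  by (induction Fs arbitrary: bs) auto

lemma li_foldl_join:
  fixes Fs :: "('n::enum) oflag list"
  assumes "li bs" "\<forall>F\<in>set Fs. is_oflag F" "length bs + length Fs \<le> CARD('n)"
  shows "li (foldl flag_join bs Fs)"
  using assms
proof (induction Fs arbitrary: bs)
  case Nil then show ?case by simp
next
  case (Cons F Fs)
  obtain j where j: "j < CARD('n)" "ub F ! j \<notin> span (set bs)" "flag_join bs F = bs @ [ub F ! j]"
    using flag_join_char[of F bs] Cons.prems by auto
  have "li (flag_join bs F)" using j Cons.prems li_snoc by simp
  then show ?case using Cons.IH[of "flag_join bs F"] Cons.prems by simp
qed

lemma evsign:
  fixes c :: "nat \<Rightarrow> real"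
  assumes "j0 < M" "\<forall>j<j0. c j = 0" "c j0 \<noteq> 0"
  shows "eventually (\<lambda>\<eta>. sgn (\<Sum>j<M. \<eta>^j * c j) = sgn (c j0)) (at_right 0)"
proof -
  define h where "h \<eta> = (\<Sum>j<M. \<eta>^(j - j0) * (if j0 \<le> j then c j else 0))" for \<eta> :: real
  have eq: "(\<Sum>j<M. \<eta>^j * c j) = \<eta>^j0 * h \<eta>" for \<eta>
    unfolding h_def sum_distrib_left
  proof (rule sum.cong)
    fix j assume "j \<in> {..<M}"
    show "\<eta>^j * c j = \<eta>^j0 * (\<eta>^(j - j0) * (if j0 \<le> j then c j else 0))"
    proof (cases "j0 \<le> j")
      case True
      then have "\<eta>^j = \<eta>^j0 * \<eta>^(j - j0)" by (metis le_add_diff_inverse power_add)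
      then show ?thesis using True by simp
    next
      case False then show ?thesis using assms by simp
    qed
  qed simp
  have lim: "(h \<longlongrightarrow> h 0) (at_right 0)"
    unfolding h_def by (intro tendsto_intros)
  have "h 0 = (\<Sum>j<M. if j = j0 then c j0 else 0)"
    unfolding h_def by (rule sum.cong) auto
  then have h0: "h 0 = c j0" using assms by simp
  have pos: "eventually (\<lambda>\<eta>::real. 0 < \<eta>) (at_right 0)" by (rule eventually_at_right_less)
  have "eventually (\<lambda>\<eta>. sgn (h \<eta>) = sgn (c j0)) (at_right 0)"
  proof (cases "c j0 > 0")
    case True
    have "eventually (\<lambda>\<eta>. 0 < h \<eta>) (at_right 0)" using order_tendstoD(1)[OF lim] True h0 by simp
    then show ?thesis by eventually_elim (use True in simp)
  next
    case False
    then have F: "c j0 < 0" using assms by simp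
    have "eventually (\<lambda>\<eta>. h \<eta> < 0) (at_right 0)" using order_tendstoD(2)[OF lim] F h0 by simp
    then show ?thesis by eventually_elim (use F in simp)
  qed
  with pos show ?thesis
    by eventually_elim (simp add: eq sgn_mult)
qed

definition pv :: "('n::enum) oflag \<times> real \<Rightarrow> (real,'n) vec" where
  "pv P = (\<Sum>j<CARD('n). (snd P)^j *\<^sub>R ub (fst P) ! j)"

fun NE :: "nat \<Rightarrow> (real list \<Rightarrow> bool) \<Rightarrow> bool" where
  "NE 0 P = P []"
| "NE (Suc k) P = NE k (\<lambda>r. eventually (\<lambda>x. P (x # r)) (at_right 0))"

lemma NE_mono: "NE k P \<Longrightarrow> (\<And>xs. P xs \<Longrightarrow> Q xs) \<Longrightarrow> NE k Q"
proof (induction k arbitrary: P Q)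
  case 0 then show ?case by simp
next
  case (Suc k)
  have "NE k (\<lambda>r. eventually (\<lambda>x. P (x # r)) (at_right 0))" using Suc.prems(1) by simp
  then have "NE k (\<lambda>r. eventually (\<lambda>x. Q (x # r)) (at_right 0))"
    by (rule Suc.IH) (erule eventually_mono, rule Suc.prems(2))
  then show ?case by simp
qed

lemma NE_conj: "NE k P \<Longrightarrow> NE k Q \<Longrightarrow> NE k (\<lambda>xs. P xs \<and> Q xs)"
proof (induction k arbitrary: P Q)
  case 0 then show ?case by simp
next
  case (Suc k)
  have "NE k (\<lambda>r. eventually (\<lambda>x. P (x # r)) (at_right 0) \<and> eventually (\<lambda>x. Q (x # r)) (at_right 0))"
    using Suc by simp
  then have "NE k (\<lambda>r. eventually (\<lambda>x. P (x # r) \<and> Q (x # r)) (at_right 0))"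
    by (rule NE_mono) (simp add: eventually_conj_iff)
  then show ?case by simp
qed

lemma NE_ex: "NE k P \<Longrightarrow> \<exists>xs. length xs = k \<and> P xs"
proof (induction k arbitrary: P)
  case 0 then show ?case by simp
next
  case (Suc k)
  then obtain r where r: "length r = k" "eventually (\<lambda>x. P (x # r)) (at_right (0::real))" by force
  then obtain x where "P (x # r)" using eventually_happens'[of "at_right (0::real)"] by force
  then show ?case using r by (intro exI[of _ "x # r"]) simp
qed

lemma D_pv_expand:
  fixes bs :: "(real,'n::enum) vec list" and F :: "'n oflag"
  assumes "length (bs @ v # X) = CARD('n)"
  shows "D (bs @ pv (F, \<eta>) # X) = (\<Sum>j<CARD('n). \<eta>^j * D (bs @ ub F ! j # X))"
proof -
  let ?L = "bs @ pv (F, \<eta>) # X"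
  define f where "f w = D (?L[length bs := w])" for w
  have lin: "linear f" unfolding f_def by (rule D_upd_linear) (use assms in auto)
  have "D ?L = f (pv (F, \<eta>))" unfolding f_def by simp
  also have "\<dots> = (\<Sum>j<CARD('n). f (\<eta>^j *\<^sub>R ub F ! j))" unfolding pv_def using linear_sum[OF lin] by simp
  also have "\<dots> = (\<Sum>j<CARD('n). \<eta>^j * f (ub F ! j))" using linear_cmul[OF lin] by simp
  also have "\<dots> = (\<Sum>j<CARD('n). \<eta>^j * D (bs @ ub F ! j # X))" unfolding f_def by simp
  finally show ?thesis .
qed

lemma set_subseqs_sub: "Qs \<in> set (subseqs Z) \<Longrightarrow> set Qs \<subseteq> set Z"
  using subseqs_powset[of Z] by blast

lemma pert:
  fixes Fs :: "('n::enum) oflag list" and bs :: "(real,'n) vec list"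
  assumes "\<forall>F\<in>set Fs. is_oflag F" "li bs"
  shows "NE (length Fs) (\<lambda>\<eta>s. \<forall>Qs\<in>set (subseqs (zip Fs \<eta>s)). length bs + length Qs = CARD('n) \<longrightarrow>
            sgn (D (bs @ map pv Qs)) = Or (foldl flag_join bs (map fst Qs)))"
  using assms
proof (induction Fs arbitrary: bs)
  case Nil
  then show ?case by (simp add: Or_D)
next
  case (Cons F Fs)
  define C where "C bs' r = (\<forall>Qs\<in>set (subseqs (zip Fs r)). length bs' + length Qs = CARD('n) \<longrightarrow>
            sgn (D (bs' @ map pv Qs)) = Or (foldl flag_join bs' (map fst Qs)))" for bs' r
  have A: "NE (length Fs) (C bs)" unfolding C_def using Cons by simp
  have key: "eventually (\<lambda>\<eta>. \<forall>Qs\<in>set (subseqs (zip Fs r)). length bs + Suc (length Qs) = CARD('n) \<longrightarrow>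
            sgn (D (bs @ pv (F, \<eta>) # map pv Qs)) = Or (foldl flag_join (flag_join bs F) (map fst Qs))) (at_right 0)"
    if "C bs r" "length bs < CARD('n) \<Longrightarrow> C (flag_join bs F) r" for r
  proof (rule eventually_ball_finite, simp, rule ballI)
    fix Qs assume Qs: "Qs \<in> set (subseqs (zip Fs r))"
    show "eventually (\<lambda>\<eta>. length bs + Suc (length Qs) = CARD('n) \<longrightarrow>
            sgn (D (bs @ pv (F, \<eta>) # map pv Qs)) = Or (foldl flag_join (flag_join bs F) (map fst Qs))) (at_right 0)"
    proof (cases "length bs + Suc (length Qs) = CARD('n)")
      case False then show ?thesis by simp
    next
      case len: True
      then have lb: "length bs < CARD('n)" by simp
      obtain j where j: "j < CARD('n)" "ub F ! j \<notin> span (set bs)" "\<forall>i<j. ub F ! i \<in> span (set bs)"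
          "flag_join bs F = bs @ [ub F ! j]"
        using flag_join_char[of F bs] Cons.prems lb by auto
      let ?X = "map pv Qs"
      define c where "c i = D (bs @ ub F ! i # ?X)" for i
      have Cj: "C (bs @ [ub F ! j]) r" using that(2) lb j(4) by simp
      have fsQ: "\<forall>G\<in>set (map fst Qs). is_oflag G"
        using set_subseqs_sub[OF Qs] Cons.prems(1) by (force dest: set_zip_leftD)
      have lif: "li (foldl flag_join (bs @ [ub F ! j]) (map fst Qs))"
        by (rule li_foldl_join) (use li_snoc[OF Cons.prems(2) j(2)] fsQ len in auto)
      have "D (foldl flag_join (bs @ [ub F ! j]) (map fst Qs)) \<noteq> 0"
        using lif len by (simp add: D_nz_li)
      then have Onz: "Or (foldl flag_join (bs @ [ub F ! j]) (map fst Qs)) \<noteq> 0" by (simp add: Or_D sgn_eq_0_iff)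
      have cj: "sgn (c j) = Or (foldl flag_join (bs @ [ub F ! j]) (map fst Qs))"
        using Cj Qs len unfolding C_def c_def by simp
      have c0: "\<forall>i<j. c i = 0"
        unfolding c_def using j(3) len by (auto intro: D_slot_span)
      have cnz: "c j \<noteq> 0" using cj Onz by auto
      have "eventually (\<lambda>\<eta>. sgn (\<Sum>i<CARD('n). \<eta>^i * c i) = sgn (c j)) (at_right 0)"
        by (rule evsign) (use j c0 cnz in auto)
      then show ?thesis
      proof (rule eventually_mono)
        fix \<eta> assume "sgn (\<Sum>i<CARD('n). \<eta>^i * c i) = sgn (c j)"
        moreover have "D (bs @ pv (F, \<eta>) # ?X) = (\<Sum>i<CARD('n). \<eta>^i * c i)"
          unfolding c_def by (rule D_pv_expand[where v = 0]) (use len in simp)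
        ultimately show "length bs + Suc (length Qs) = CARD('n) \<longrightarrow>
            sgn (D (bs @ pv (F, \<eta>) # map pv Qs)) = Or (foldl flag_join (flag_join bs F) (map fst Qs))"
          using cj j(4) by simp
      qed
    qed
  qed
  have B: "NE (length Fs) (\<lambda>r. length bs < CARD('n) \<longrightarrow> C (flag_join bs F) r)"
  proof (cases "length bs < CARD('n)")
    case True
    obtain j where j: "ub F ! j \<notin> span (set bs)" "flag_join bs F = bs @ [ub F ! j]"
      using flag_join_char[of F bs] Cons.prems True by auto
    have "li (flag_join bs F)" using j li_snoc[OF Cons.prems(2)] by simp
    then have "NE (length Fs) (C (flag_join bs F))" unfolding C_def using Cons.IH[of "flag_join bs F"] Cons.prems by simp
    then show ?thesis by (rule NE_mono) simp
  next
    case False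
    have "NE (length Fs) (C bs)" by (rule A)
    then show ?thesis by (rule NE_mono) (use False in simp)
  qed
  have "NE (length Fs) (\<lambda>r. C bs r \<and> (length bs < CARD('n) \<longrightarrow> C (flag_join bs F) r))"
    by (rule NE_conj[OF A B])
  then have "NE (length Fs) (\<lambda>r. eventually (\<lambda>\<eta>. \<forall>Qs\<in>set (subseqs (zip (F # Fs) (\<eta> # r))).
          length bs + length Qs = CARD('n) \<longrightarrow>
            sgn (D (bs @ map pv Qs)) = Or (foldl flag_join bs (map fst Qs))) (at_right 0))"
  proof (rule NE_mono)
    fix r assume H: "C bs r \<and> (length bs < CARD('n) \<longrightarrow> C (flag_join bs F) r)"
    have k: "eventually (\<lambda>\<eta>. \<forall>Qs\<in>set (subseqs (zip Fs r)). length bs + Suc (length Qs) = CARD('n) \<longrightarrow>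
            sgn (D (bs @ pv (F, \<eta>) # map pv Qs)) = Or (foldl flag_join (flag_join bs F) (map fst Qs))) (at_right 0)"
      using key H by blast
    then show "eventually (\<lambda>\<eta>. \<forall>Qs\<in>set (subseqs (zip (F # Fs) (\<eta> # r))).
          length bs + length Qs = CARD('n) \<longrightarrow>
            sgn (D (bs @ map pv Qs)) = Or (foldl flag_join bs (map fst Qs))) (at_right 0)"
    proof (rule eventually_mono)
      fix \<eta> assume h: "\<forall>Qs\<in>set (subseqs (zip Fs r)). length bs + Suc (length Qs) = CARD('n) \<longrightarrow>
            sgn (D (bs @ pv (F, \<eta>) # map pv Qs)) = Or (foldl flag_join (flag_join bs F) (map fst Qs))"
      show "\<forall>Qs\<in>set (subseqs (zip (F # Fs) (\<eta> # r))).
          length bs + length Qs = CARD('n) \<longrightarrow>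
            sgn (D (bs @ map pv Qs)) = Or (foldl flag_join bs (map fst Qs))"
        using h H unfolding C_def by (auto simp: Let_def)
    qed
  qed
  then show ?case by simp
qed

lemma reals_alt:
  fixes A :: "real set"
  assumes "finite A" "even (card A)"
  shows "(\<Sum>x\<in>A. \<Prod>y\<in>A-{x}. sgn (x - y)) = 0"
  using assms
proof (induction "card A" arbitrary: A rule: less_induct)
  case less
  show ?case
  proof (cases "A = {}")
    case True then show ?thesis by simp
  next
    case ne: False
    define a1 where "a1 = Max A"
    have a1: "a1 \<in> A" "\<forall>y\<in>A. y \<le> a1" using ne less.prems by (auto simp: a1_def)
    have "card A \<noteq> 1" using less.prems by auto
    moreover have "card A \<noteq> 0" using ne less.prems by simp
    ultimately have "A - {a1} \<noteq> {}"
    proof -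
      assume c1: "card A \<noteq> 1"
      show ?thesis
      proof
        assume "A - {a1} = {}"
        then have "A = {a1}" using a1 by auto
        then show False using c1 by simp
      qed
    qed
    define a2 where "a2 = Max (A - {a1})"
    have fin1: "finite (A - {a1})" using less.prems by simp
    have a2: "a2 \<in> A - {a1}" "\<forall>y\<in>A-{a1}. y \<le> a2"
      unfolding a2_def using Max_in[OF fin1 \<open>A - {a1} \<noteq> {}\<close>] Max_ge[OF fin1] by auto
    have "a2 \<le> a1" "a2 \<noteq> a1" using a1 a2(1) by auto
    then have a21: "a2 < a1" by simp
    define A' where "A' = A - {a1, a2}"
    have fA': "finite A'" using less.prems by (simp add: A'_def)
    have cA': "card A = card A' + 2"
    proof -
      have "A = insert a1 (insert a2 A')" using a1 a2 by (auto simp: A'_def)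
      moreover have "a1 \<notin> insert a2 A'" "a2 \<notin> A'" using a21 by (auto simp: A'_def)
      ultimately show ?thesis using fA' by simp
    qed
    have IH: "(\<Sum>x\<in>A'. \<Prod>y\<in>A'-{x}. sgn (x - y)) = 0"
      by (rule less.hyps) (use cA' fA' less.prems in auto)
    have t1: "(\<Prod>y\<in>A-{a1}. sgn (a1 - y)) = 1"
      by (rule prod.neutral) (use a1 in \<open>auto simp: sgn_if\<close>)
    have "A - {a2} = insert a1 A'" using a1 a21 by (auto simp: A'_def)
    moreover have "a1 \<notin> A'" by (simp add: A'_def)
    ultimately have "(\<Prod>y\<in>A-{a2}. sgn (a2 - y)) = sgn (a2 - a1) * (\<Prod>y\<in>A'. sgn (a2 - y))"
      using fA' by simp
    moreover have "(\<Prod>y\<in>A'. sgn (a2 - y)) = 1"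
      by (rule prod.neutral) (use a2 in \<open>force simp: sgn_if A'_def\<close>)
    ultimately have t2: "(\<Prod>y\<in>A-{a2}. sgn (a2 - y)) = -1" using a21 by simp
    have t3: "(\<Prod>y\<in>A-{x}. sgn (x - y)) = (\<Prod>y\<in>A'-{x}. sgn (x - y))" if x: "x \<in> A'" for x
    proof -
      have xA: "x \<in> A - {a1}" "x \<noteq> a2" using x by (auto simp: A'_def)
      then have "x \<le> a2" using a2(2) by blast
      then have "x < a2" using xA by simp
      then have "x < a1" using a21 by simp
      have "A - {x} = insert a1 (insert a2 (A' - {x}))" using x a1 a2 by (auto simp: A'_def)
      moreover have "a1 \<notin> insert a2 (A' - {x})" "a2 \<notin> A' - {x}" using a21 by (auto simp: A'_def)
      ultimately show ?thesis using fA' \<open>x < a2\<close> \<open>x < a1\<close> by simp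
    qed
    have "A = insert a1 (insert a2 A')" using a1 a2 by (auto simp: A'_def)
    moreover have "a1 \<notin> insert a2 A'" "a2 \<notin> A'" using a21 by (auto simp: A'_def)
    ultimately have "(\<Sum>x\<in>A. \<Prod>y\<in>A-{x}. sgn (x - y)) =
        (\<Prod>y\<in>A-{a1}. sgn (a1 - y)) + (\<Prod>y\<in>A-{a2}. sgn (a2 - y)) + (\<Sum>x\<in>A'. \<Prod>y\<in>A-{x}. sgn (x - y))"
      using fA' by (simp add: add.assoc)
    also have "(\<Sum>x\<in>A'. \<Prod>y\<in>A-{x}. sgn (x - y)) = (\<Sum>x\<in>A'. \<Prod>y\<in>A'-{x}. sgn (x - y))"
      using t3 by (rule sum.cong[OF refl])
    finally show ?thesis using t1 t2 IH by simp
  qed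
qed

lemma index_alt:
  fixes r :: "nat \<Rightarrow> real"
  assumes "inj_on r {..<m}" "even m"
  shows "(\<Sum>j<m. \<Prod>k\<in>{..<m}-{j}. sgn (r j - r k)) = 0"
proof -
  have "(\<Sum>j<m. \<Prod>k\<in>{..<m}-{j}. sgn (r j - r k)) = (\<Sum>j<m. \<Prod>y\<in>r`{..<m}-{r j}. sgn (r j - y))"
  proof (rule sum.cong[OF refl])
    fix j assume j: "j \<in> {..<m}"
    have e: "r`{..<m}-{r j} = r`({..<m}-{j})" using assms(1) j by (auto simp: inj_on_def)
    have "inj_on r ({..<m}-{j})" using assms(1) by (rule inj_on_subset) auto
    then show "(\<Prod>k\<in>{..<m}-{j}. sgn (r j - r k)) = (\<Prod>y\<in>r`{..<m}-{r j}. sgn (r j - y))"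
      unfolding e by (simp add: prod.reindex)
  qed
  also have "\<dots> = (\<Sum>x\<in>r`{..<m}. \<Prod>y\<in>r`{..<m}-{x}. sgn (x - y))"
    using assms(1) by (simp add: sum.reindex)
  also have "\<dots> = 0" by (rule reals_alt) (use assms in \<open>auto simp: card_image\<close>)
  finally show ?thesis .
qed


lemma planar:
  fixes a b :: "nat \<Rightarrow> real"
  assumes m: "even m" and nz: "\<forall>j<m. \<forall>k<m. j \<noteq> k \<longrightarrow> a j * b k - b j * a k \<noteq> 0"
  shows "(\<Sum>j<m. \<Prod>k\<in>{..<m}-{j}. sgn (a j * b k - b j * a k)) = 0"
proof -
  define \<epsilon> where "\<epsilon> j = (if b j > 0 \<or> (b j = 0 \<and> a j > 0) then 1 else -1::real)" for j
  define a' where "a' j = \<epsilon> j * a j" for j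
  define b' where "b' j = \<epsilon> j * b j" for j
  have e1: "\<epsilon> j = 1 \<or> \<epsilon> j = -1" for j by (simp add: \<epsilon>_def)
  have abnz: "a j \<noteq> 0 \<or> b j \<noteq> 0" if j: "j < m" for j
  proof -
    have "m \<noteq> 0" "m \<noteq> 1" using m j by auto
    then have m2: "m \<ge> 2" by linarith
    define k where "k = (if j = 0 then 1 else 0::nat)"
    have "k < m" "k \<noteq> j" using m2 by (auto simp: k_def)
    then have "a j * b k - b j * a k \<noteq> 0" using nz j by auto
    then show ?thesis by auto
  qed
  have norm: "b' j > 0 \<or> (b' j = 0 \<and> a' j > 0)" if "j < m" for j
    using abnz[OF that] by (auto simp: a'_def b'_def \<epsilon>_def)
  have ww: "a j * b k - b j * a k = \<epsilon> j * \<epsilon> k * (a' j * b' k - b' j * a' k)" for j k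
    using e1[of j] e1[of k] by (auto simp: a'_def b'_def algebra_simps)
  define M where "M = 1 + (\<Sum>k<m. \<bar>a' k / b' k\<bar>)"
  have Mle: "a' j / b' j < M" if "j < m" for j
  proof -
    have "\<bar>a' j / b' j\<bar> \<le> (\<Sum>k<m. \<bar>a' k / b' k\<bar>)"
      by (rule member_le_sum) (use that in auto)
    then show ?thesis unfolding M_def by linarith
  qed
  define r where "r j = (if b' j > 0 then a' j / b' j else M)" for j
  have sw: "sgn (a' j * b' k - b' j * a' k) = sgn (r j - r k)"
    if jk: "j < m" "k < m" "j \<noteq> k" for j k
  proof -
    have wnz: "a' j * b' k - b' j * a' k \<noteq> 0"
      using nz jk ww[of j k] by auto
    consider "b' j > 0" "b' k > 0" | "b' j > 0" "b' k = 0" "a' k > 0" | "b' j = 0" "a' j > 0" "b' k > 0"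
      | "b' j = 0" "b' k = 0"
      using norm[OF jk(1)] norm[OF jk(2)] by auto
    then show ?thesis
    proof cases
      case 1
      have "a' j * b' k - b' j * a' k = (b' j * b' k) * (r j - r k)"
        using 1 by (simp add: r_def field_simps)
      then show ?thesis using 1 by (simp add: sgn_mult)
    next
      case 2
      have "r j - r k < 0" using 2 Mle[OF jk(1)] by (simp add: r_def)
      moreover have "a' j * b' k - b' j * a' k < 0" using 2 by simp
      ultimately show ?thesis by simp
    next
      case 3
      have "r j - r k > 0" using 3 Mle[OF jk(2)] by (simp add: r_def)
      moreover have "a' j * b' k - b' j * a' k > 0" using 3 by simp
      ultimately show ?thesis by simp
    qed (use wnz in simp)
  qed
  have inj: "inj_on r {..<m}"
  proof (rule inj_onI)
    fix j k assume "j \<in> {..<m}" "k \<in> {..<m}" "r j = r k"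
    then show "j = k" using sw[of j k] nz ww[of j k] by (metis diff_self lessThan_iff mult_zero_right sgn_eq_0_iff)
  qed
  define E where "E = (\<Prod>k<m. \<epsilon> k)"
  have tm: "(\<Prod>k\<in>{..<m}-{j}. sgn (a j * b k - b j * a k)) = E * (\<Prod>k\<in>{..<m}-{j}. sgn (r j - r k))"
    if j: "j < m" for j
  proof -
    have "(\<Prod>k\<in>{..<m}-{j}. sgn (a j * b k - b j * a k)) = (\<Prod>k\<in>{..<m}-{j}. (\<epsilon> j * \<epsilon> k) * sgn (r j - r k))"
    proof (rule prod.cong[OF refl])
      fix k assume k: "k \<in> {..<m}-{j}"
      have "sgn (a j * b k - b j * a k) = sgn (\<epsilon> j * \<epsilon> k) * sgn (a' j * b' k - b' j * a' k)"
        unfolding ww by (simp add: sgn_mult)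
      also have "sgn (\<epsilon> j * \<epsilon> k) = \<epsilon> j * \<epsilon> k" using e1[of j] e1[of k] by auto
      finally show "sgn (a j * b k - b j * a k) = (\<epsilon> j * \<epsilon> k) * sgn (r j - r k)"
        using sw[of j k] k j by simp
    qed
    also have "\<dots> = \<epsilon> j ^ (m - 1) * (\<Prod>k\<in>{..<m}-{j}. \<epsilon> k) * (\<Prod>k\<in>{..<m}-{j}. sgn (r j - r k))"
      using j by (simp add: prod.distrib)
    also have "(\<Prod>k\<in>{..<m}-{j}. \<epsilon> k) = \<epsilon> j * E"
    proof -
      have "E = \<epsilon> j * (\<Prod>k\<in>{..<m}-{j}. \<epsilon> k)" unfolding E_def using j by (simp add: prod.remove)
      then show ?thesis using e1[of j] by auto
    qed
    also have "\<epsilon> j ^ (m - 1) * (\<epsilon> j * E) = \<epsilon> j ^ m * E"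
      using j by (cases m) auto
    also have "\<epsilon> j ^ m = 1" using e1[of j] m by auto
    finally show ?thesis by simp
  qed
  have "(\<Sum>j<m. \<Prod>k\<in>{..<m}-{j}. sgn (a j * b k - b j * a k)) = E * (\<Sum>j<m. \<Prod>k\<in>{..<m}-{j}. sgn (r j - r k))"
    by (simp add: tm sum_distrib_left)
  also have "\<dots> = 0" using index_alt[OF inj m] by simp
  finally show ?thesis .
qed

lemma length_remove_nth[simp]: "i < length xs \<Longrightarrow> length (remove_nth i xs) = length xs - 1"
  by (simp add: remove_nth_def min_def)

lemma nth_remove_nth:
  assumes "i < length xs" "q < length xs - 1"
  shows "remove_nth i xs ! q = xs ! (if q < i then q else Suc q)"
  using assms by (auto simp: remove_nth_def nth_append min_def)

lemma map_remove_nth: "remove_nth i (map f xs) = map f (remove_nth i xs)"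
  by (simp add: remove_nth_def take_map drop_map)

lemma set_remove_nth: "set (remove_nth i xs) \<subseteq> set xs"
  unfolding remove_nth_def using set_take_subset set_drop_subset by fastforce

lemma remove_nth_Suc_Cons: "remove_nth (Suc k) (x # xs) = x # remove_nth k xs"
  by (simp add: remove_nth_def)

lemma remove_nth_0: "remove_nth 0 xs = tl xs"
  by (simp add: remove_nth_def drop_Suc)

lemma remove_nth_comm:
  assumes "j < k" "k < length xs"
  shows "remove_nth (k - 1) (remove_nth j xs) = remove_nth j (remove_nth k xs)"
proof (rule nth_equalityI)
  show "length (remove_nth (k - 1) (remove_nth j xs)) = length (remove_nth j (remove_nth k xs))"
    using assms by simp
  fix q assume "q < length (remove_nth (k - 1) (remove_nth j xs))"
  then have q: "q < length xs - 2" using assms by simp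
  show "remove_nth (k - 1) (remove_nth j xs) ! q = remove_nth j (remove_nth k xs) ! q"
    using assms q by (auto simp: nth_remove_nth)
qed

lemma rm01: "remove_nth 0 (remove_nth (Suc 0) xs) = drop 2 xs"
  by (cases xs) (simp_all add: remove_nth_def)

lemma subseq_remove_nth: "subseq (remove_nth i xs) xs"
proof -
  have d: "drop i xs = take 1 (drop i xs) @ drop (Suc i) xs"
    by (metis append_take_drop_id drop_drop plus_1_eq_Suc)
  have "subseq (drop (Suc i) xs) (drop i xs)"
    by (subst d) (rule subseq_drop_many, rule subseq_order.refl)
  then have "subseq (take i xs @ drop (Suc i) xs) (take i xs @ drop i xs)"
    by (simp only: subseq_append')
  then show ?thesis by (simp add: remove_nth_def)
qed

lemma D_slot_sum:
  fixes bs :: "(real,'n::enum) vec list"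
  assumes "length (bs @ v # X) = CARD('n)"
  shows "D (bs @ (\<Sum>l\<in>S. c l *\<^sub>R w l) # X) = (\<Sum>l\<in>S. c l * D (bs @ w l # X))"
proof -
  let ?L = "bs @ v # X"
  define f where "f u = D (?L[length bs := u])" for u
  have lin: "linear f" unfolding f_def by (rule D_upd_linear) (use assms in auto)
  have "D (bs @ (\<Sum>l\<in>S. c l *\<^sub>R w l) # X) = f (\<Sum>l\<in>S. c l *\<^sub>R w l)" unfolding f_def by simp
  also have "\<dots> = (\<Sum>l\<in>S. f (c l *\<^sub>R w l))" using linear_sum[OF lin] by simp
  also have "\<dots> = (\<Sum>l\<in>S. c l * f (w l))" using linear_cmul[OF lin] by simp
  also have "\<dots> = (\<Sum>l\<in>S. c l * D (bs @ w l # X))" unfolding f_def by simp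
  finally show ?thesis .
qed

lemma laplace:
  fixes hs :: "(real,'n::enum) vec list"
  assumes len: "length hs = Suc CARD('n)" and nz: "D (remove_nth 0 hs) \<noteq> 0"
  shows "(\<Sum>i<Suc CARD('n). ((-1)^i * D (remove_nth i hs)) *\<^sub>R hs ! i) = 0"
proof -
  obtain h0 t where ht: "hs = h0 # t" using len by (cases hs) auto
  have lt: "length t = CARD('n)" using len ht by simp
  have Dt: "D t \<noteq> 0" using nz ht by (simp add: remove_nth_0)
  obtain c where c: "h0 = (\<Sum>k<CARD('n). c k *\<^sub>R t ! k)" using D_nz_span[OF Dt] by blast
  have Dk: "D (remove_nth (Suc k) hs) = c k * ((-1)^k * D t)" if k: "k < CARD('n)" for k
  proof -
    let ?R = "remove_nth k t"
    have lR: "length ?R = CARD('n) - 1" using k lt by simp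
    have "D (remove_nth (Suc k) hs) = D ([] @ (\<Sum>l<CARD('n). c l *\<^sub>R t ! l) # ?R)"
      using ht c by (simp add: remove_nth_Suc_Cons)
    also have "\<dots> = (\<Sum>l<CARD('n). c l * D ([] @ t ! l # ?R))"
      by (rule D_slot_sum[where v = 0]) (use lR k in simp)
    also have "\<dots> = (\<Sum>l<CARD('n). if l = k then c k * ((-1)^k * D t) else 0)"
    proof (rule sum.cong[OF refl])
      fix l assume l: "l \<in> {..<CARD('n)}"
      show "c l * D ([] @ t ! l # ?R) = (if l = k then c k * ((-1)^k * D t) else 0)"
      proof (cases "l = k")
        case True then show ?thesis using D_move_nth[of t k] lt k by simp
      next
        case False
        define p where "p = (if l < k then l else l - 1)"
        have p: "p < CARD('n) - 1" using l k False by (auto simp: p_def)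
        have "?R ! p = t ! l" using False l k lt p by (auto simp: nth_remove_nth p_def)
        then have "D (t ! l # ?R) = 0"
          by (intro D_rep[of 0 "Suc p"]) (use p lR lt in auto)
        then show ?thesis using False by simp
      qed
    qed
    also have "\<dots> = c k * ((-1)^k * D t)" using k by simp
    finally show ?thesis .
  qed
  have "(\<Sum>i<Suc CARD('n). ((-1)^i * D (remove_nth i hs)) *\<^sub>R hs ! i) =
        D t *\<^sub>R h0 + (\<Sum>k<CARD('n). ((-1)^(Suc k) * D (remove_nth (Suc k) hs)) *\<^sub>R t ! k)"
    unfolding sum.lessThan_Suc_shift using ht by (simp add: remove_nth_0)
  also have "(\<Sum>k<CARD('n). ((-1)^(Suc k) * D (remove_nth (Suc k) hs)) *\<^sub>R t ! k) =
        (\<Sum>k<CARD('n). (- D t) *\<^sub>R (c k *\<^sub>R t ! k))"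
    by (rule sum.cong[OF refl]) (simp add: Dk)
  also have "\<dots> = - (D t *\<^sub>R h0)" unfolding c by (simp add: scaleR_sum_right sum_negf)
  finally show ?thesis by simp
qed

lemma gen:
  fixes gs :: "(real,'n::enum) vec list"
  assumes ev: "even CARD('n)" and len: "length gs = CARD('n) + 2"
    and nzD: "\<forall>j<CARD('n)+2. \<forall>i<CARD('n)+1. D (remove_nth i (remove_nth j gs)) \<noteq> 0"
  shows "(\<Sum>j<CARD('n)+2. (-1)^j * (\<Prod>i<CARD('n)+1. sgn (D (remove_nth i (remove_nth j gs))))) = (0::real)"
proof -
  define N where "N = CARD('n)"
  define m where "m = N + 2"
  define RR where "RR j i = D (remove_nth i (remove_nth j gs))" for j i
  define ush where "ush j k = (if k < j then k else k - 1)" for j k :: nat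
  define sh where "sh j i = (if i < j then i else Suc i)" for j i :: nat
  define L where "L j k = (if k = j then 0 else (-1)^(ush j k) * RR j (ush j k))" for j k
  have lenm: "length gs = m" using len by (simp add: m_def N_def)
  have RRnz: "RR j i \<noteq> 0" if "j < m" "i < Suc N" for j i
    using nzD that by (simp add: RR_def m_def N_def)
  have bij: "bij_betw (sh j) {..<Suc N} ({..<m}-{j})" if "j < m" for j
  proof -
    have "inj_on (sh j) {..<Suc N}" by (auto simp: inj_on_def sh_def split: if_splits)
    moreover have "sh j ` {..<Suc N} = {..<m}-{j}"
    proof
      show "sh j ` {..<Suc N} \<subseteq> {..<m}-{j}" by (auto simp: sh_def m_def)
      show "{..<m}-{j} \<subseteq> sh j ` {..<Suc N}"
      proof
        fix k assume k: "k \<in> {..<m}-{j}"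
        have "ush j k < Suc N" "sh j (ush j k) = k" using k that by (auto simp: ush_def sh_def m_def)
        then show "k \<in> sh j ` {..<Suc N}" by (metis imageI lessThan_iff)
      qed
    qed
    ultimately show ?thesis by (simp add: bij_betw_def)
  qed
  have Lsh: "L j (sh j i) = (-1)^i * RR j i" for j i
    by (auto simp: L_def sh_def ush_def)
  have rel: "(\<Sum>k<m. L j k *\<^sub>R gs ! k) = 0" if j: "j < m" for j
  proof -
    let ?hs = "remove_nth j gs"
    have lh: "length ?hs = Suc N" using j lenm by (simp add: m_def)
    have lap: "(\<Sum>i<Suc N. ((-1)^i * D (remove_nth i ?hs)) *\<^sub>R ?hs ! i) = 0"
      using laplace[of ?hs] lh RRnz[OF j, of 0] unfolding RR_def N_def by simp
    have "(\<Sum>k<m. L j k *\<^sub>R gs ! k) = (\<Sum>k\<in>{..<m}-{j}. L j k *\<^sub>R gs ! k)"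
      using j by (simp add: sum.remove L_def)
    also have "\<dots> = (\<Sum>i<Suc N. L j (sh j i) *\<^sub>R gs ! (sh j i))"
      using sum.reindex_bij_betw[OF bij[OF j], of "\<lambda>k. L j k *\<^sub>R gs ! k"] by simp
    also have "\<dots> = (\<Sum>i<Suc N. ((-1)^i * D (remove_nth i ?hs)) *\<^sub>R ?hs ! i)"
    proof (rule sum.cong[OF refl])
      fix i assume i: "i \<in> {..<Suc N}"
      have "?hs ! i = gs ! (sh j i)" using i j lenm by (simp add: nth_remove_nth sh_def m_def)
      then show "L j (sh j i) *\<^sub>R gs ! (sh j i) = ((-1)^i * D (remove_nth i ?hs)) *\<^sub>R ?hs ! i"
        by (simp add: Lsh RR_def)
    qed
    finally show ?thesis using lap by simp
  qed
  have Lnz: "L j k \<noteq> 0" if "j < m" "k < m" "j \<noteq> k" for j k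
  proof -
    have u: "ush j k < Suc N" using that by (auto simp: ush_def m_def)
    show ?thesis using RRnz[OF that(1) u] that(3) by (auto simp: L_def)
  qed
  have Ldiag: "L j j = 0" for j by (simp add: L_def)
  have Lsym: "L k j = - ((-1)^(j+k)) * L j k" if jk: "j < k" "k < m" for j k
  proof -
    have e: "RR j (k - 1) = RR k j" unfolding RR_def using remove_nth_comm[of j k gs] jk lenm by simp
    obtain k' where k': "k = Suc k'" using jk by (cases k) auto
    show ?thesis using jk e by (simp add: L_def ush_def k' power_add)
  qed
  define K where "K = (\<Prod>i<Suc N. (-1::real)^i)"
  have KK: "K * K = 1" unfolding K_def prod.distrib[symmetric] by (simp add: power_add[symmetric] flip: power_mult_distrib)
  have Eterm: "(\<Prod>i<Suc N. sgn (RR j i)) = K * (\<Prod>k\<in>{..<m}-{j}. sgn (L j k))" if j: "j < m" for j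
  proof -
    have "(\<Prod>k\<in>{..<m}-{j}. sgn (L j k)) = (\<Prod>i<Suc N. sgn (L j (sh j i)))"
      using prod.reindex_bij_betw[OF bij[OF j], of "\<lambda>k. sgn (L j k)"] by simp
    also have "\<dots> = (\<Prod>i<Suc N. (-1)^i * sgn (RR j i))"
      by (simp add: Lsh sgn_mult)
    also have "\<dots> = K * (\<Prod>i<Suc N. sgn (RR j i))" by (simp add: K_def prod.distrib)
    finally have "K * (\<Prod>k\<in>{..<m}-{j}. sgn (L j k)) = (K * K) * (\<Prod>i<Suc N. sgn (RR j i))" by simp
    then show ?thesis using KK by simp
  qed
  define a where "a k = L 0 k" for k
  define b where "b k = L 1 k" for k
  define s where "s j = L j 1 / L 0 1" for j
  define t where "t j = L j 0 / L 1 0" for j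
  have m2: "0 < m" "1 < m" by (auto simp: m_def)
  have L01: "L 0 1 \<noteq> 0" "L 1 0 \<noteq> 0" using Lnz m2 by auto
  have span: "L j k = s j * a k + t j * b k" if j: "j < m" and k: "k < m" for j k
  proof -
    define \<mu> where "\<mu> k = L j k - s j * L 0 k - t j * L 1 k" for k
    have "(\<Sum>k<m. \<mu> k *\<^sub>R gs ! k) = (\<Sum>k<m. L j k *\<^sub>R gs ! k) - s j *\<^sub>R (\<Sum>k<m. L 0 k *\<^sub>R gs ! k)
          - t j *\<^sub>R (\<Sum>k<m. L 1 k *\<^sub>R gs ! k)"
      by (simp add: \<mu>_def scaleR_diff_left scaleR_sum_right sum_subtractf)
    also have "\<dots> = 0" using rel[OF j] rel[OF m2(1)] rel[OF m2(2)] by simp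
    finally have S: "(\<Sum>k<m. \<mu> k *\<^sub>R gs ! k) = 0" .
    have mu0: "\<mu> 0 = 0" "\<mu> 1 = 0" using L01 by (simp_all add: \<mu>_def s_def t_def Ldiag)
    have "(\<Sum>k<m. \<mu> k *\<^sub>R gs ! k) = \<mu> 0 *\<^sub>R gs ! 0 + (\<mu> 1 *\<^sub>R gs ! 1 + (\<Sum>k<N. \<mu> (Suc (Suc k)) *\<^sub>R gs ! Suc (Suc k)))"
      unfolding m_def by (simp add: sum.lessThan_Suc_shift del: sum.lessThan_Suc)
    then have S2: "(\<Sum>k<N. \<mu> (Suc (Suc k)) *\<^sub>R drop 2 gs ! k) = 0" using S mu0 lenm by (simp add: m_def)
    have Dz: "D (drop 2 gs) \<noteq> 0" using RRnz[OF m2(2), of 0] by (simp add: RR_def rm01)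
    have all: "\<forall>c. (\<Sum>k<CARD('n). c k *\<^sub>R drop 2 gs ! k) = 0 \<longrightarrow> (\<forall>k<CARD('n). c k = 0)"
      using Dz D_nz_iff by blast
    have "\<forall>k<N. \<mu> (Suc (Suc k)) = 0" using all[rule_format, of "\<lambda>k. \<mu> (Suc (Suc k))"] S2 unfolding N_def by simp
    then have "\<mu> k = 0" using mu0 k by (cases k; cases "k - 1") (auto simp: m_def)
    then show ?thesis by (simp add: \<mu>_def a_def b_def)
  qed
  have abnz: "a j \<noteq> 0 \<or> b j \<noteq> 0" if j: "j < m" for j
  proof -
    define i where "i = (if j = 0 then 1 else 0::nat)"
    have i: "i < m" "i \<noteq> j" using m2 by (auto simp: i_def)
    then have "L i j \<noteq> 0" using Lnz j by auto
    then show ?thesis using span[OF i(1) j] by auto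
  qed
  define w where "w j k = a j * b k - b j * a k" for j k
  define c where "c j = (t j * a j - s j * b j) / ((a j)^2 + (b j)^2)" for j
  have Lc: "L j k = c j * w j k" if j: "j < m" and k: "k < m" for j k
  proof -
    have q: "(a j)^2 + (b j)^2 > 0" using abnz[OF j] by (simp add: sum_power2_gt_zero_iff)
    have r0: "s j * a j + t j * b j = 0" using span[OF j j] Ldiag by simp
    define Q where "Q = (a j)^2 + (b j)^2"
    have Qnz: "Q \<noteq> 0" using q unfolding Q_def by linarith
    have P1: "s j * Q = - (t j * a j - s j * b j) * b j"
    proof -
      have "s j * Q - (- (t j * a j - s j * b j) * b j) = a j * (s j * a j + t j * b j)"
        by (simp add: Q_def power2_eq_square algebra_simps)
      then show ?thesis using r0 by simp
    qed
    have P2: "t j * Q = (t j * a j - s j * b j) * a j"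
    proof -
      have "t j * Q - ((t j * a j - s j * b j) * a j) = b j * (s j * a j + t j * b j)"
        by (simp add: Q_def power2_eq_square algebra_simps)
      then show ?thesis using r0 by simp
    qed
    have cQ: "c j = (t j * a j - s j * b j) / Q" by (simp add: c_def Q_def)
    have "s j = (s j * Q) / Q" using Qnz by simp
    also have "\<dots> = - c j * b j" unfolding P1 cQ by (simp add: algebra_simps minus_divide_left)
    finally have sj: "s j = - c j * b j" .
    have "t j = (t j * Q) / Q" using Qnz by simp
    also have "\<dots> = c j * a j" unfolding P2 cQ by simp
    finally have tj: "t j = c j * a j" .
    note sj tj
    then show ?thesis using span[OF j k] by (simp add: w_def algebra_simps)
  qed
  have wnz: "w j k \<noteq> 0" if "j < m" "k < m" "j \<noteq> k" for j k
    using Lnz[OF that] Lc[OF that(1,2)] by auto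
  have cpow: "c k = (-1)^k * c 0" if k: "k < m" for k
  proof (cases "k = 0")
    case True then show ?thesis by simp
  next
    case False
    have "L k 0 = - ((-1)^k) * L 0 k" using Lsym[of 0 k] False k by simp
    then have "c k * w k 0 = - ((-1)^k) * (c 0 * w 0 k)" using Lc[OF k m2(1)] Lc[OF m2(1) k] by simp
    moreover have "w k 0 = - w 0 k" by (simp add: w_def)
    ultimately have "c k * w 0 k = ((-1)^k * c 0) * w 0 k" by simp
    then show ?thesis using wnz[OF m2(1) k] False by simp
  qed
  define C where "C = c 0"
  have Lf: "sgn (L j k) = (-1)^j * sgn C * sgn (w j k)" if "j < m" "k < m" for j k
    using Lc[OF that] cpow[OF that(1)] by (simp add: C_def sgn_mult)
  have row: "(-1)^j * (\<Prod>i<Suc N. sgn (RR j i)) = K * sgn C ^ (m - 1) * (\<Prod>k\<in>{..<m}-{j}. sgn (w j k))"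
    if j: "j < m" for j
  proof -
    have "(\<Prod>k\<in>{..<m}-{j}. sgn (L j k)) = (\<Prod>k\<in>{..<m}-{j}. ((-1)^j * sgn C) * sgn (w j k))"
      by (rule prod.cong[OF refl]) (use Lf j in auto)
    also have "\<dots> = ((-1)^j * sgn C) ^ (m - 1) * (\<Prod>k\<in>{..<m}-{j}. sgn (w j k))"
      using j by (simp add: prod.distrib)
    finally have P: "(\<Prod>k\<in>{..<m}-{j}. sgn (L j k)) = ((-1)^j * sgn C) ^ (m - 1) * (\<Prod>k\<in>{..<m}-{j}. sgn (w j k))" .
    have evm: "even m" using ev by (simp add: m_def N_def)
    have "(-1::real)^j * ((-1)^j * sgn C) ^ (m - 1) = ((-1)^j)^m * sgn C ^ (m - 1)"
      using m2 by (cases m) (auto simp: power_mult_distrib)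
    also have "((-1::real)^j)^m = 1" using evm by (simp add: power_mult[symmetric] mult.commute[of j] power_mult)
    finally have X: "(-1::real)^j * ((-1)^j * sgn C) ^ (m - 1) = sgn C ^ (m - 1)" by simp
    have "(-1)^j * (\<Prod>i<Suc N. sgn (RR j i)) = (-1)^j * (K * (((-1)^j * sgn C) ^ (m - 1) * (\<Prod>k\<in>{..<m}-{j}. sgn (w j k))))"
      unfolding Eterm[OF j] P ..
    also have "\<dots> = K * ((-1::real)^j * ((-1)^j * sgn C) ^ (m - 1)) * (\<Prod>k\<in>{..<m}-{j}. sgn (w j k))"
      by (simp only: mult.assoc mult.commute mult.left_commute)
    also have "\<dots> = K * sgn C ^ (m - 1) * (\<Prod>k\<in>{..<m}-{j}. sgn (w j k))" unfolding X ..
    finally show ?thesis .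
  qed
  have "(\<Sum>j<m. (-1)^j * (\<Prod>i<Suc N. sgn (RR j i))) = K * sgn C ^ (m - 1) * (\<Sum>j<m. \<Prod>k\<in>{..<m}-{j}. sgn (w j k))"
  proof -
    have "(\<Sum>j<m. (-1)^j * (\<Prod>i<Suc N. sgn (RR j i))) = (\<Sum>j<m. K * sgn C ^ (m - 1) * (\<Prod>k\<in>{..<m}-{j}. sgn (w j k)))"
      by (rule sum.cong[OF refl], rule row) simp
    also have "\<dots> = K * sgn C ^ (m - 1) * (\<Sum>j<m. \<Prod>k\<in>{..<m}-{j}. sgn (w j k))"
      by (rule sum_distrib_left[symmetric])
    finally show ?thesis .
  qed
  also have "(\<Sum>j<m. \<Prod>k\<in>{..<m}-{j}. sgn (w j k)) = 0"
    unfolding w_def by (rule planar) (use ev wnz in \<open>auto simp: m_def N_def w_def\<close>)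
  finally show ?thesis by (simp add: RR_def m_def N_def)
qed

theorem theorem4p2:
  fixes Fs :: "('n::enum) oflag list"
  assumes "even CARD('n)"
    and "length Fs = CARD('n) + 2"
    and "\<forall>F\<in>set Fs. is_oflag F"
  shows "dE_fun Fs = 0"
proof -
  have NE1: "NE (length Fs) (\<lambda>\<eta>s. \<forall>Qs\<in>set (subseqs (zip Fs \<eta>s)). length ([]::(real,'n) vec list) + length Qs = CARD('n) \<longrightarrow>
            sgn (D ([] @ map pv Qs)) = Or (foldl flag_join [] (map fst Qs)))"
    by (rule pert[OF assms(3) li_nil])
  obtain \<eta>s where ls: "length \<eta>s = length Fs" and
    P: "\<forall>Qs\<in>set (subseqs (zip Fs \<eta>s)). length Qs = CARD('n) \<longrightarrow>
            sgn (D (map pv Qs)) = Or (flag_bracket (map fst Qs))"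
    using NE_ex[OF NE1] by (auto simp: flag_bracket_def)
  define Z where "Z = zip Fs \<eta>s"
  define gs where "gs = map pv Z"
  have lZ: "length Z = CARD('n) + 2" using ls assms(2) by (simp add: Z_def)
  have lg: "length gs = CARD('n) + 2" using lZ by (simp add: gs_def)
  have fstZ: "map fst Z = Fs" using ls by (simp add: Z_def)
  have key: "Or (flag_bracket (remove_nth i (remove_nth j Fs))) = sgn (D (remove_nth i (remove_nth j gs)))
      \<and> D (remove_nth i (remove_nth j gs)) \<noteq> 0"
    if j: "j < CARD('n) + 2" and i: "i < CARD('n) + 1" for i j
  proof -
    define Qs where "Qs = remove_nth i (remove_nth j Z)"
    have "subseq Qs Z" unfolding Qs_def
      using subseq_order.trans[OF subseq_remove_nth subseq_remove_nth] by blast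
    then have Qin: "Qs \<in> set (subseqs Z)" by simp
    have lQ: "length Qs = CARD('n)" using lZ i j by (simp add: Qs_def)
    have mf: "map fst Qs = remove_nth i (remove_nth j Fs)" unfolding Qs_def fstZ[symmetric] by (simp add: map_remove_nth)
    have mp: "map pv Qs = remove_nth i (remove_nth j gs)" unfolding Qs_def gs_def by (simp add: map_remove_nth)
    have e: "sgn (D (remove_nth i (remove_nth j gs))) = Or (flag_bracket (remove_nth i (remove_nth j Fs)))"
      using P Qin lQ mf mp unfolding Z_def by auto
    have fl: "\<forall>F\<in>set (remove_nth i (remove_nth j Fs)). is_oflag F"
      using assms(3) set_remove_nth[of i "remove_nth j Fs"] set_remove_nth[of j Fs] by blast
    have lr: "length (remove_nth i (remove_nth j Fs)) = CARD('n)" using assms(2) i j by simp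
    have "li (flag_bracket (remove_nth i (remove_nth j Fs)))"
      unfolding flag_bracket_def by (rule li_foldl_join[OF li_nil fl]) (use lr in simp)
    then have "D (flag_bracket (remove_nth i (remove_nth j Fs))) \<noteq> 0"
      using lr by (simp add: D_nz_li flag_bracket_def)
    then have "Or (flag_bracket (remove_nth i (remove_nth j Fs))) \<noteq> 0" by (simp add: Or_D sgn_eq_0_iff)
    then show ?thesis using e by (auto simp: sgn_eq_0_iff)
  qed
  have "dE_fun Fs = (\<Sum>j<CARD('n)+2. (-1)^j * (\<Prod>i<CARD('n)+1. sgn (D (remove_nth i (remove_nth j gs)))))"
    unfolding dE_fun_def assms(2)
  proof (rule sum.cong[OF refl])
    fix j assume j: "j \<in> {..<CARD('n)+2}"
    have "E_fun (remove_nth j Fs) = (\<Prod>i<CARD('n)+1. Or (flag_bracket (remove_nth i (remove_nth j Fs))))"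
      unfolding E_fun_def using j assms(2) by simp
    also have "\<dots> = (\<Prod>i<CARD('n)+1. sgn (D (remove_nth i (remove_nth j gs))))"
      by (rule prod.cong[OF refl]) (use key j in auto)
    finally show "(-1)^j * E_fun (remove_nth j Fs) = (-1)^j * (\<Prod>i<CARD('n)+1. sgn (D (remove_nth i (remove_nth j gs))))"
      by simp
  qed
  also have "\<dots> = 0"
    by (rule gen[OF assms(1) lg]) (use key in auto)
  finally show ?thesis .
qed

end
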